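(* Let $\mathbb{X}$ be a real Banach space such that $\operatorname{Sm}\mathbb{X}$ is a dense $G_\delta$ subset of $\mathbb{X}$, and let $H=\{x\in\mathbb{X}:\varphi(x)=c\}$ be a hyperplane not passing through the origin (with $\varphi$ a non-zero bounded linear functional and $c\neq0$). If a bounded linear operator $T:\mathbb{X}\to\mathbb{X}$ preserves Birkhoff–James orthogonality at each point of $H$, then $T$ is a scalar multiple of an isometry.
   Context: $u\perp_B v$ means $\|u+\lambda v\|\ge\|u\|$ for all real $\lambda$. $T$ preserves Birkhoff–James orthogonality at $x$ if $x\perp_B v$ implies $Tx\perp_B Tv$ for all $v$. For non-zero $z$, $J(z)=\{f\in\mathbb{X}^*:\|f\|=1,\ f(z)=\|z\|\}$; $z$ is smooth if $J(z)$ is a singleton; $\operatorname{Sm}\mathbb{X}$ is the set of smooth points. "Scalar multiple of an isometry": there is $\lambda\ge0$ with $\|Tx\|=\lambda\|x\|$ for all $x$. *)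

theory Defs
  imports "HOL-Analysis.Analysis"
begin

definition bj_orth :: "'a::real_normed_vector \<Rightarrow> 'a \<Rightarrow> bool" where
  "bj_orth u v \<longleftrightarrow> (\<forall>t::real. norm (u + t *\<^sub>R v) \<ge> norm u)"

definition preserves_bj_at :: "('a::real_normed_vector \<Rightarrow> 'a) \<Rightarrow> 'a \<Rightarrow> bool" where
  "preserves_bj_at T x \<longleftrightarrow> (\<forall>v. bj_orth x v \<longrightarrow> bj_orth (T x) (T v))"

definition supp_funcs :: "'a::real_normed_vector \<Rightarrow> ('a \<Rightarrow> real) set" where
  "supp_funcs z = {f. bounded_linear f \<and> onorm f = 1 \<and> f z = norm z}"

definition smooth_point :: "'a::real_normed_vector \<Rightarrow> bool" where
  "smooth_point z \<longleftrightarrow> z \<noteq> 0 \<and> (\<exists>f. supp_funcs z = {f})"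

definition smooth_points :: "'a::real_normed_vector set" where
  "smooth_points = {z. smooth_point z}"

end

theory Submission imports Defs begin

lemma bj_local:
  fixes z v :: "'a::real_normed_vector"
  assumes d: "\<delta> > 0" and h: "\<And>l. \<bar>l\<bar> < \<delta> \<Longrightarrow> norm z \<le> norm (z + l *\<^sub>R v)"
  shows "bj_orth z v"
  unfolding bj_orth_def
proof
  fix l :: real
  show "norm z \<le> norm (z + l *\<^sub>R v)"
  proof (cases "\<bar>l\<bar> < \<delta>")
    case True thus ?thesis using h by auto
  next
    case False
    define \<theta> where "\<theta> = \<delta> / (2*\<bar>l\<bar>)"
    have l0: "\<bar>l\<bar> > 0" using False d by auto
    have th: "0 < \<theta>" "\<theta> < 1" using False d l0 by (auto simp: \<theta>_def field_simps)
    have "\<bar>\<theta>*l\<bar> = \<delta>/2" using l0 d by (simp add: \<theta>_def abs_mult field_simps)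
    hence "\<bar>\<theta>*l\<bar> < \<delta>" using d by simp
    hence "norm z \<le> norm (z + (\<theta>*l) *\<^sub>R v)" by (rule h)
    also have "z + (\<theta>*l) *\<^sub>R v = (1-\<theta>) *\<^sub>R z + \<theta> *\<^sub>R (z + l *\<^sub>R v)" by (simp add: algebra_simps)
    also have "norm \<dots> \<le> norm ((1-\<theta>) *\<^sub>R z) + norm (\<theta> *\<^sub>R (z + l *\<^sub>R v))" by (rule norm_triangle_ineq)
    also have "\<dots> = (1-\<theta>) * norm z + \<theta> * norm (z + l *\<^sub>R v)" using th by simp
    finally have "\<theta> * norm z \<le> \<theta> * norm (z + l *\<^sub>R v)" by (simp add: algebra_simps)
    thus ?thesis using th by simp
  qed
qed

lemma pres_pos:
  fixes T :: "'a::real_normed_vector \<Rightarrow> 'a" and \<phi> :: "'a \<Rightarrow> real"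
  assumes T: "bounded_linear T" and \<phi>: "bounded_linear \<phi>" and c: "c \<noteq> 0"
    and P: "\<forall>x\<in>{x. \<phi> x = c}. preserves_bj_at T x"
    and z: "\<phi> z \<noteq> 0" and o: "bj_orth z v"
  shows "norm (T z) \<le> norm (T z + T v)"
proof -
  define r where "r = c / \<phi> z"
  have r0: "r \<noteq> 0" using c z by (simp add: r_def)
  define h where "h = r *\<^sub>R z"
  have "\<phi> h = c" using z by (simp add: h_def r_def linear_scale[OF bounded_linear.linear[OF \<phi>]])
  have "bj_orth h v"
    unfolding bj_orth_def
  proof
    fix l :: real
    have "norm h = \<bar>r\<bar> * norm z" by (simp add: h_def)
    also have "\<dots> \<le> \<bar>r\<bar> * norm (z + (l/r) *\<^sub>R v)"
      using o unfolding bj_orth_def by (intro mult_left_mono) auto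
    also have "\<dots> = norm (r *\<^sub>R (z + (l/r) *\<^sub>R v))" by simp
    also have "r *\<^sub>R (z + (l/r) *\<^sub>R v) = h + l *\<^sub>R v" using r0 by (simp add: h_def algebra_simps)
    finally show "norm h \<le> norm (h + l *\<^sub>R v)" .
  qed
  hence "bj_orth (T h) (T v)" using P \<open>\<phi> h = c\<close> unfolding preserves_bj_at_def by auto
  hence "norm (T h) \<le> norm (T h + r *\<^sub>R T v)" unfolding bj_orth_def by auto
  also have "T h + r *\<^sub>R T v = r *\<^sub>R (T z + T v)"
    by (simp add: h_def linear_scale[OF bounded_linear.linear[OF T]] algebra_simps)
  finally have "\<bar>r\<bar> * norm (T z) \<le> \<bar>r\<bar> * norm (T z + T v)"
    by (simp add: h_def linear_scale[OF bounded_linear.linear[OF T]])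
  thus ?thesis using r0 by simp
qed

lemma support:
  fixes x d :: "'a::real_normed_vector"
  assumes sub: "\<And>u. norm (x + u *\<^sub>R d) \<ge> norm (x + t *\<^sub>R d) + \<beta> * (u - t)"
    and L: "norm (x + t *\<^sub>R d) + (s - t) * \<beta> > 0"
  shows "bj_orth (x + t *\<^sub>R d) ((norm (x + t *\<^sub>R d) / (norm (x + t *\<^sub>R d) + (s - t) * \<beta>)) *\<^sub>R (x + s *\<^sub>R d) - (x + t *\<^sub>R d))"
proof -
  define F where "F = norm (x + t *\<^sub>R d)"
  define Lv where "Lv = F + (s - t) * \<beta>"
  define cc where "cc = F / Lv"
  have Lp: "Lv > 0" using L by (simp add: Lv_def F_def)
  have ccL: "cc * Lv = F" using Lp by (simp add: cc_def)
  show ?thesis unfolding F_def[symmetric] Lv_def[symmetric] cc_def[symmetric]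
  proof (rule bj_local[of "1/(\<bar>cc-1\<bar>+1)"])
    show "0 < 1/(\<bar>cc-1\<bar>+1)" by simp
  next
    fix l :: real
    assume l: "\<bar>l\<bar> < 1/(\<bar>cc-1\<bar>+1)"
    define \<gamma> where "\<gamma> = 1 + l*(cc-1)"
    have "\<bar>l*(cc-1)\<bar> < 1"
    proof -
      have "\<bar>l*(cc-1)\<bar> = \<bar>l\<bar> * \<bar>cc-1\<bar>" by (simp add: abs_mult)
      also have "\<dots> \<le> \<bar>l\<bar> * (\<bar>cc-1\<bar>+1)" by (simp add: mult_left_mono)
      also have "\<dots> < 1" using l by (simp add: field_simps)
      finally show ?thesis .
    qed
    hence g: "\<gamma> > 0" unfolding \<gamma>_def by linarith
    define u where "u = (t + l*(cc * s - t)) / \<gamma>"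
    have eq: "(x + t *\<^sub>R d) + l *\<^sub>R (cc *\<^sub>R (x + s *\<^sub>R d) - (x + t *\<^sub>R d)) = \<gamma> *\<^sub>R (x + u *\<^sub>R d)"
    proof -
      have gu1: "\<gamma> * u = t + l*(cc * s - t)" using g by (simp add: u_def)
      have "\<gamma> *\<^sub>R (x + u *\<^sub>R d) = \<gamma> *\<^sub>R x + (\<gamma> * u) *\<^sub>R d" by (simp add: algebra_simps)
      also have "\<dots> = \<gamma> *\<^sub>R x + (t + l*(cc * s - t)) *\<^sub>R d" by (simp only: gu1)
      finally show ?thesis by (simp add: \<gamma>_def algebra_simps)
    qed
    have gu: "\<gamma> * u - \<gamma> * t = l * cc * (s - t)" using g by (simp add: u_def \<gamma>_def field_simps)
    have "norm (\<gamma> *\<^sub>R (x + u *\<^sub>R d)) = \<gamma> * norm (x + u *\<^sub>R d)" using g by simp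
    also have "\<dots> \<ge> \<gamma> * (F + \<beta> * (u - t))" using g sub[of u] by (simp add: F_def)
    moreover have "\<gamma> * (F + \<beta> * (u - t)) = F"
    proof -
      have "\<gamma> * (F + \<beta> * (u - t)) = \<gamma> * F + \<beta> * (\<gamma> * u - \<gamma> * t)" by (simp add: algebra_simps)
      also have "\<dots> = \<gamma> * F + \<beta> * (l * cc * (s - t))" by (simp add: gu)
      also have "\<dots> = F + l * (cc * Lv - F)" by (simp add: \<gamma>_def Lv_def algebra_simps)
      also have "\<dots> = F" by (simp add: ccL)
      finally show ?thesis .
    qed
    ultimately show "norm (x + t *\<^sub>R d) \<le> norm ((x + t *\<^sub>R d) + l *\<^sub>R (cc *\<^sub>R (x + s *\<^sub>R d) - (x + t *\<^sub>R d)))"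
      unfolding eq F_def by linarith
  qed
qed


lemma ratio_le:
  fixes T :: "'a::real_normed_vector \<Rightarrow> 'a" and \<phi> :: "'a \<Rightarrow> real"
  assumes T: "bounded_linear T" and \<phi>: "bounded_linear \<phi>"
    and H: "\<And>z v. \<phi> z > 0 \<Longrightarrow> bj_orth z v \<Longrightarrow> norm (T z) \<le> norm (T z + T v)"
    and x: "\<phi> x > 0" and y: "\<phi> y > 0"
  shows "norm (T x) / norm x \<le> norm (T y) / norm y"
proof -
  define d where "d = y - x"
  define f where "f = (\<lambda>t. norm (x + t *\<^sub>R d))"
  define g where "g = (\<lambda>t. norm (T (x + t *\<^sub>R d)))"
  define D where "D = norm d"
  define R where "R = (\<lambda>t. g t / f t)"
  obtain K where K: "K > 0" "\<And>v. norm (\<phi> v) \<le> norm v * K"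
    using bounded_linear.pos_bounded[OF \<phi>] by blast
  obtain C where C: "C > 0" "\<And>v. norm (T v) \<le> norm v * C"
    using bounded_linear.pos_bounded[OF T] by blast
  define a where "a = min (\<phi> x) (\<phi> y)"
  have a: "a > 0" using x y by (simp add: a_def)
  have D0: "D \<ge> 0" by (simp add: D_def)
  have \<phi>p: "\<phi> (x + t *\<^sub>R d) \<ge> a" if "t \<in> {0..1}" for t
  proof -
    have e: "\<phi> (x + t *\<^sub>R d) = (1-t) * \<phi> x + t * \<phi> y"
      using bounded_linear.linear[OF \<phi>]
      by (simp add: d_def linear_add linear_scale linear_diff algebra_simps)
    have "(1-t) * a \<le> (1-t) * \<phi> x" using that by (intro mult_left_mono) (auto simp: a_def)
    moreover have "t * a \<le> t * \<phi> y" using that by (intro mult_left_mono) (auto simp: a_def)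
    ultimately show ?thesis unfolding e by (simp add: algebra_simps)
  qed
  have fpos: "f t \<ge> a / K" if "t \<in> {0..1}" for t
  proof -
    have "a \<le> norm (\<phi> (x + t *\<^sub>R d))" using \<phi>p[OF that] by simp
    also have "\<dots> \<le> f t * K" using K(2) by (simp add: f_def)
    finally show ?thesis using K(1) by (simp add: field_simps)
  qed
  have fpos': "f t > 0" if "t \<in> {0..1}" for t
    using fpos[OF that] a K(1) by (smt (verit) divide_pos_pos)
  have lip: "\<bar>f u - f t\<bar> \<le> \<bar>u - t\<bar> * D" for u t
  proof -
    have "\<bar>f u - f t\<bar> \<le> norm ((x + u *\<^sub>R d) - (x + t *\<^sub>R d))"
      unfolding f_def by (rule norm_triangle_ineq3)
    also have "(x + u *\<^sub>R d) - (x + t *\<^sub>R d) = (u - t) *\<^sub>R d" by (simp add: algebra_simps)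
    finally show ?thesis by (simp add: D_def)
  qed
  have conv: "(\<sigma>+\<tau>) * f t \<le> \<tau> * f (t-\<sigma>) + \<sigma> * f (t+\<tau>)" if "\<sigma> > 0" "\<tau> > 0" for \<sigma> \<tau> t
  proof -
    have "(\<sigma>+\<tau>) * f t = norm ((\<sigma>+\<tau>) *\<^sub>R (x + t *\<^sub>R d))" using that by (simp add: f_def)
    also have "(\<sigma>+\<tau>) *\<^sub>R (x + t *\<^sub>R d) = \<tau> *\<^sub>R (x + (t-\<sigma>) *\<^sub>R d) + \<sigma> *\<^sub>R (x + (t+\<tau>) *\<^sub>R d)"
      by (simp add: algebra_simps)
    also have "norm \<dots> \<le> norm (\<tau> *\<^sub>R (x + (t-\<sigma>) *\<^sub>R d)) + norm (\<sigma> *\<^sub>R (x + (t+\<tau>) *\<^sub>R d))"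
      by (rule norm_triangle_ineq)
    also have "\<dots> = \<tau> * f (t-\<sigma>) + \<sigma> * f (t+\<tau>)" using that by (simp add: f_def)
    finally show ?thesis .
  qed
  define Q where "Q = (\<lambda>t \<tau>. (f (t+\<tau>) - f t) / \<tau>)"
  define \<beta> where "\<beta> = (\<lambda>t. Inf (Q t ` {0<..}))"
  have Qlow: "Q t \<tau> \<ge> -D" if "\<tau> > 0" for t \<tau>
  proof -
    have "\<bar>f (t+\<tau>) - f t\<bar> \<le> \<tau> * D" using lip[of "t+\<tau>" t] that by simp
    hence "f (t+\<tau>) - f t \<ge> -D * \<tau>" by (simp add: algebra_simps)
    thus ?thesis using that by (simp add: Q_def field_simps)
  qed
  have bdd: "bdd_below (Q t ` {0<..})" for t
    using Qlow by (intro bdd_belowI[of _ "-D"]) auto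
  have \<beta>le: "\<beta> t \<le> Q t \<tau>" if "\<tau> > 0" for t \<tau>
    unfolding \<beta>_def using that bdd by (intro cInf_lower) auto
  have \<beta>ge: "\<beta> t \<ge> -D" for t
    unfolding \<beta>_def using Qlow by (intro cInf_greatest) auto
  have \<beta>up: "\<beta> t \<le> D" for t
  proof -
    have "\<beta> t \<le> Q t 1" by (rule \<beta>le) simp
    also have "\<dots> \<le> D" using lip[of "t+1" t] by (simp add: Q_def)
    finally show ?thesis .
  qed
  have leftsl: "(f t - f (t-\<sigma>)) / \<sigma> \<le> \<beta> t" if "\<sigma> > 0" for t \<sigma>
    unfolding \<beta>_def
  proof (rule cInf_greatest)
    show "Q t ` {0<..} \<noteq> {}" by auto
  next
    fix q assume "q \<in> Q t ` {0<..}"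
    then obtain \<tau> where \<tau>: "\<tau> > 0" "q = Q t \<tau>" by auto
    have "(\<sigma>+\<tau>) * f t \<le> \<tau> * f (t-\<sigma>) + \<sigma> * f (t+\<tau>)" using conv that \<tau> by blast
    hence "\<tau> * (f t - f (t-\<sigma>)) \<le> \<sigma> * (f (t+\<tau>) - f t)" by (simp add: algebra_simps)
    moreover have "\<tau> * q = f (t+\<tau>) - f t" using \<tau> by (simp add: Q_def)
    hence "\<sigma> * (f (t+\<tau>) - f t) = \<tau> * (\<sigma> * q)" by (metis mult.left_commute)
    ultimately have "\<tau> * (f t - f (t-\<sigma>)) \<le> \<tau> * (\<sigma> * q)" by linarith
    hence "f t - f (t-\<sigma>) \<le> \<sigma> * q" using \<tau> by simp
    thus "(f t - f (t-\<sigma>)) / \<sigma> \<le> q" using that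
      by (simp add: divide_simps mult.commute)
  qed
  have sub: "f u \<ge> f t + \<beta> t * (u - t)" for u t
  proof (cases "u > t")
    case True
    have "\<beta> t \<le> Q t (u - t)" using True by (intro \<beta>le) simp
    thus ?thesis using True by (simp add: Q_def field_simps)
  next
    case False
    show ?thesis
    proof (cases "u = t")
      case True thus ?thesis by simp
    next
      case False2: False
      hence s: "t - u > 0" using False by simp
      have "(f t - f (t - (t-u))) / (t-u) \<le> \<beta> t" by (rule leftsl[OF s])
      hence "f t - f u \<le> \<beta> t * (t - u)" using s by (simp add: field_simps)
      thus ?thesis by (simp add: algebra_simps)
    qed
  qed
  have Rle: "R t \<le> C" if "t \<in> {0..1}" for t
  proof -
    have "g t \<le> f t * C" using C(2) by (simp add: g_def f_def)
    thus ?thesis using fpos'[OF that] by (simp add: R_def field_simps)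
  qed
  define M where "M = 2 * C * K / a"
  have M0: "M \<ge> 0" using C K a by (simp add: M_def)
  have step: "R t + M * (s - t) * \<beta> t \<le> R s + M * (s - t) * \<beta> s"
    if t: "t \<in> {0..1}" and s: "s \<in> {0..1}" and ts: "t \<le> s" and sm: "(s - t) * D \<le> a / (2*K)" for t s
  proof -
    define L where "L = f t + (s - t) * \<beta> t"
    have "(s - t) * \<beta> t \<ge> -((s-t) * D)" using \<beta>ge[of t] ts
      by (metis minus_mult_right mult_left_mono diff_ge_0_iff_ge)
    hence "L \<ge> a / K - a / (2*K)" using fpos[OF t] sm by (simp add: L_def)
    also have "a / K - a / (2*K) = a / (2*K)" using K(1) by (simp add: field_simps)
    finally have La: "L \<ge> a / (2*K)" .
    have Lp: "L > 0" using La a K(1) by (smt (verit) divide_pos_pos mult_pos_pos)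
    have ft: "f t > 0" using fpos'[OF t] .
    have fs: "f s > 0" using fpos'[OF s] .
    have bj: "bj_orth (x + t *\<^sub>R d) ((f t / L) *\<^sub>R (x + s *\<^sub>R d) - (x + t *\<^sub>R d))"
      unfolding L_def f_def
      by (rule support) (use sub Lp in \<open>auto simp: f_def L_def\<close>)
    have "norm (T (x + t *\<^sub>R d)) \<le> norm (T (x + t *\<^sub>R d) + T ((f t / L) *\<^sub>R (x + s *\<^sub>R d) - (x + t *\<^sub>R d)))"
      by (rule H[OF _ bj]) (use \<phi>p[OF t] a in auto)
    also have "T (x + t *\<^sub>R d) + T ((f t / L) *\<^sub>R (x + s *\<^sub>R d) - (x + t *\<^sub>R d)) = (f t / L) *\<^sub>R T (x + s *\<^sub>R d)"
      using bounded_linear.linear[OF T] by (simp add: linear_diff linear_scale)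
    finally have "g t \<le> (f t / L) * g s" using ft Lp by (simp add: g_def)
    hence gL: "g t * L \<le> f t * g s" using Lp by (simp add: field_simps)
    have e0: "f s - L \<ge> 0" using sub[where u=s and t=t] by (simp add: L_def algebra_simps)
    have e1: "f s - L \<le> (s - t) * (\<beta> s - \<beta> t)" using sub[where u=t and t=s] by (simp add: L_def algebra_simps)
    have "R t \<le> g s / L" using gL ft Lp by (simp add: R_def field_simps)
    also have "g s / L = R s + R s * (f s - L) / L" using fs Lp by (simp add: R_def field_simps)
    also have "R s * (f s - L) / L \<le> C * (f s - L) / L"
      using Rle[OF s] e0 Lp by (intro divide_right_mono mult_right_mono) auto
    also have "C * (f s - L) / L \<le> C * (f s - L) / (a / (2*K))"
      using La e0 C(1) a K(1) Lp by (intro divide_left_mono) auto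
    also have "C * (f s - L) / (a / (2*K)) = M * (f s - L)" using a K(1) by (simp add: M_def field_simps)
    also have "M * (f s - L) \<le> M * ((s - t) * (\<beta> s - \<beta> t))" by (rule mult_left_mono[OF e1 M0])
    finally show ?thesis by (simp add: algebra_simps)
  qed
  have main: "R 0 \<le> R 1 + 2 * M * D / real n" if n: "n > 0" "D / real n \<le> a / (2*K)" for n :: nat
  proof -
    define h where "h = (\<lambda>i::nat. R (real i / n) + M * (1 / n) * \<beta> (real i / n))"
    have "\<forall>i\<le>n. h 0 \<le> h i"
    proof (intro allI impI)
      fix i show "i \<le> n \<Longrightarrow> h 0 \<le> h i"
      proof (induction i)
        case 0 thus ?case by simp
      next
        case (Suc i)
        have d1: "real (Suc i) / n - real i / n = 1 / n" by (simp add: diff_divide_distrib[symmetric])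
        have t1: "real i / n \<in> {0..1}" using Suc.prems n by (simp add: field_simps)
        have s1: "real (Suc i) / n \<in> {0..1}" using Suc.prems n by (simp add: field_simps del: of_nat_Suc)
        have ts: "real i / n \<le> real (Suc i) / n" using n by (simp add: divide_right_mono)
        have sm: "(real (Suc i) / n - real i / n) * D \<le> a / (2*K)" using n(2) unfolding d1 by simp
        have "h i \<le> h (Suc i)"
          unfolding h_def using step[OF t1 s1 ts sm] unfolding d1 .

        thus ?case using Suc by simp
      qed
    qed
    hence "h 0 \<le> h n" by simp
    hence "R 0 \<le> R 1 + M * (1/n) * (\<beta> 1 - \<beta> 0)" using n by (simp add: h_def algebra_simps)
    also have "M * (1/n) * (\<beta> 1 - \<beta> 0) \<le> M * (1/n) * (2 * D)"
      using \<beta>up[of 1] \<beta>ge[of 0] M0 n by (intro mult_left_mono) auto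
    finally show ?thesis by (simp add: mult.commute mult.left_commute)
  qed
  have "R 0 \<le> R 1"
  proof (rule ccontr)
    assume "\<not> R 0 \<le> R 1"
    hence \<epsilon>: "R 0 - R 1 > 0" by simp
    obtain n :: nat where nb: "real n > max (2 * M * D / (R 0 - R 1)) (2 * K * D / a) + 1"
      using reals_Archimedean2 by blast
    have n0: "n > 0" using nb D0 M0 \<epsilon> a K(1) by (smt (verit) divide_nonneg_pos mult_nonneg_nonneg of_nat_0_less_iff)
    have "2 * K * D / a < n" using nb by simp
    hence "D / real n \<le> a / (2*K)" using n0 a K(1) by (simp add: field_simps)
    hence "R 0 \<le> R 1 + 2 * M * D / real n" using main n0 by blast
    moreover have "2 * M * D / (R 0 - R 1) < n" using nb by simp
    hence "2 * M * D / real n < R 0 - R 1" using n0 \<epsilon> by (simp add: field_simps)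
    ultimately show False by simp
  qed
  thus ?thesis by (simp add: R_def g_def f_def d_def)
qed


theorem mainTheorem8:
  fixes T :: "'a::banach \<Rightarrow> 'a" and \<phi> :: "'a \<Rightarrow> real" and c :: real
  assumes "gdelta_in euclidean (smooth_points :: 'a set)"
    and "closure (smooth_points :: 'a set) = UNIV"
    and "bounded_linear \<phi>" and "\<phi> \<noteq> (\<lambda>x. 0)" and "c \<noteq> 0"
    and "bounded_linear T"
    and "\<forall>x\<in>{x. \<phi> x = c}. preserves_bj_at T x"
  shows "\<exists>k::real\<ge>0. \<forall>x. norm (T x) = k * norm x"
proof -
  note \<phi> = assms(3) and T = assms(6)
  have H: "\<And>z v. \<phi> z > 0 \<Longrightarrow> bj_orth z v \<Longrightarrow> norm (T z) \<le> norm (T z + T v)"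
    using pres_pos[OF T \<phi> assms(5) assms(7)] by force
  obtain v where v: "\<phi> v \<noteq> 0" using assms(4) by auto
  define h0 where "h0 = (if \<phi> v > 0 then v else - v)"
  have h0: "\<phi> h0 > 0" using v by (auto simp: h0_def linear_neg[OF bounded_linear.linear[OF \<phi>]])
  define k where "k = norm (T h0) / norm h0"
  have k0: "k \<ge> 0" by (simp add: k_def)
  have pos: "norm (T x) = k * norm x" if "\<phi> x > 0" for x
  proof -
    have "x \<noteq> 0" using that linear_0[OF bounded_linear.linear[OF \<phi>]] by auto
    moreover have "norm (T x) / norm x = k"
      unfolding k_def using ratio_le[OF T \<phi> H] that h0 by (meson antisym)
    ultimately show ?thesis by (simp add: field_simps)
  qed
  have nz: "norm (T x) = k * norm x" if "\<phi> x \<noteq> 0" for x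
  proof (cases "\<phi> x > 0")
    case True thus ?thesis by (rule pos)
  next
    case False
    hence "\<phi> (-x) > 0" using that linear_neg[OF bounded_linear.linear[OF \<phi>]] by auto
    hence "norm (T (-x)) = k * norm (-x)" by (rule pos)
    thus ?thesis using linear_neg[OF bounded_linear.linear[OF T]] by simp
  qed
  obtain C where C: "C > 0" "\<And>v. norm (T v) \<le> norm v * C"
    using bounded_linear.pos_bounded[OF T] by blast
  have "norm (T x) = k * norm x" for x
  proof (rule ccontr)
    assume ne: "norm (T x) \<noteq> k * norm x"
    define \<delta> where "\<delta> = \<bar>norm (T x) - k * norm x\<bar>"
    have \<delta>: "\<delta> > 0" using ne by (simp add: \<delta>_def)
    define B where "B = norm h0 * (C + k) + 1"
    have B: "B > 0" proof - have "norm h0 * (C + k) \<ge> 0" using C(1) k0 by simp thus ?thesis by (simp add: B_def) qed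
    define \<epsilon> where "\<epsilon> = \<delta> / (2 * B)"
    have \<epsilon>: "\<epsilon> > 0" using \<delta> B by (simp add: \<epsilon>_def)
    define w where "w = x + \<epsilon> *\<^sub>R h0"
    have "\<phi> w \<noteq> 0 \<or> \<phi> x \<noteq> 0"
    proof -
      have "\<phi> w = \<phi> x + \<epsilon> * \<phi> h0"
        using bounded_linear.linear[OF \<phi>] by (simp add: w_def linear_add linear_scale)
      moreover have "\<epsilon> * \<phi> h0 > 0" using \<epsilon> h0 by simp
      ultimately show ?thesis by auto
    qed
    hence "\<phi> w \<noteq> 0" using nz ne by blast
    hence wk: "norm (T w) = k * norm w" by (rule nz)
    have e1: "\<bar>norm (T x) - norm (T w)\<bar> \<le> \<epsilon> * norm h0 * C"
    proof -
      have "\<bar>norm (T x) - norm (T w)\<bar> \<le> norm (T x - T w)" by (rule norm_triangle_ineq3)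
      also have "T x - T w = T (- (\<epsilon> *\<^sub>R h0))"
        using bounded_linear.linear[OF T] by (simp add: w_def linear_diff[symmetric])
      also have "norm \<dots> \<le> norm (- (\<epsilon> *\<^sub>R h0)) * C" by (rule C(2))
      also have "\<dots> = \<epsilon> * norm h0 * C" using \<epsilon> by simp
      finally show ?thesis .
    qed
    have e2: "\<bar>norm x - norm w\<bar> \<le> \<epsilon> * norm h0"
    proof -
      have "\<bar>norm x - norm w\<bar> \<le> norm (x - w)" by (rule norm_triangle_ineq3)
      also have "\<dots> = \<epsilon> * norm h0" using \<epsilon> by (simp add: w_def)
      finally show ?thesis .
    qed
    have "\<bar>k * norm x - k * norm w\<bar> \<le> k * (\<epsilon> * norm h0)"
      using e2 k0 by (simp add: abs_mult right_diff_distrib[symmetric] mult_left_mono)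
    hence "\<delta> \<le> \<epsilon> * norm h0 * C + k * (\<epsilon> * norm h0)" using e1 wk unfolding \<delta>_def by linarith
    also have "\<dots> = \<epsilon> * (norm h0 * (C + k))" by (simp add: algebra_simps)
    also have "\<dots> < \<epsilon> * B" using \<epsilon> by (simp add: B_def)
    also have "\<epsilon> * B = \<delta> / 2" using B by (simp add: \<epsilon>_def)
    finally show False using \<delta> by simp
  qed
  thus ?thesis using k0 by blast
qed

end
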